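(* Let $k\ge3$. Let $C$ be a cycle of length $2k$ and $P$ a path of length $2k$ such that $E(C)\cap E(P)=\emptyset$ and $V(C)\cap V(P)\ne\emptyset$. If $H:=C\cup P$ has girth at least $2k-2$, then $H$ can be decomposed into two paths whose lengths lie in $\{2k-1,2k,2k+1\}$.
   Context: Graphs are finite and simple; length = number of edges; girth = length of a shortest cycle. A decomposition of a graph is a set of subgraphs whose edge sets partition its edge set. *)

theory Defs
  imports Main "HOL-Library.Extended_Nat"
begin

text \<open>Graphs are given by their edge sets: an edge is a 2-element vertex set.
A cycle is given by its cyclic list of at least 3 distinct vertices; its length is the
number of vertices (= number of edges).\<close>

definition path_edges :: "'a list \<Rightarrow> 'a set set" where
  "path_edges xs = {{xs ! i, xs ! Suc i} | i. Suc i < length xs}"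

definition is_path :: "'a list \<Rightarrow> bool" where
  "is_path xs \<longleftrightarrow> xs \<noteq> [] \<and> distinct xs"

definition path_length :: "'a list \<Rightarrow> nat" where
  "path_length xs = length xs - 1"

definition cycle_edges :: "'a list \<Rightarrow> 'a set set" where
  "cycle_edges xs = path_edges xs \<union> {{last xs, hd xs}}"

definition is_cycle :: "'a list \<Rightarrow> bool" where
  "is_cycle xs \<longleftrightarrow> length xs \<ge> 3 \<and> distinct xs"

definition cycle_length :: "'a list \<Rightarrow> nat" where
  "cycle_length xs = length xs"

text \<open>Girth of the graph with edge set E: length of a shortest cycle (infinity if acyclic).\<close>
definition girth :: "'a set set \<Rightarrow> enat" where
  "girth E = Inf {enat (cycle_length cs) | cs. is_cycle cs \<and> cycle_edges cs \<subseteq> E}"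

definition decomposes_into_two_paths :: "'a set set \<Rightarrow> 'a list \<Rightarrow> 'a list \<Rightarrow> bool" where
  "decomposes_into_two_paths E p1 p2 \<longleftrightarrow>
     is_path p1 \<and> is_path p2 \<and> path_edges p1 \<union> path_edges p2 = E \<and>
     path_edges p1 \<inter> path_edges p2 = {}"

end

theory Submission
  imports Defs
begin


definition ed :: "'a list \<Rightarrow> nat \<Rightarrow> 'a set" where
  "ed xs j = {xs ! j, xs ! Suc j}"

lemma pe_image: "path_edges xs = ed xs ` {..<length xs - 1}"
  unfolding path_edges_def ed_def by (auto simp: image_def)


lemma pe_Nil[simp]: "path_edges [] = {}" by (simp add: pe_image)
lemma pe_single[simp]: "path_edges [x] = {}" by (simp add: pe_image)
lemma pe_Cons2: "path_edges (x # y # xs) = insert {x,y} (path_edges (y # xs))"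
  unfolding path_edges_def
proof (intro equalityI subsetI)
  fix e assume "e \<in> {{(x # y # xs) ! i, (x # y # xs) ! Suc i} |i. Suc i < length (x # y # xs)}"
  then obtain i where i: "Suc i < length (x # y # xs)" "e = {(x # y # xs) ! i, (x # y # xs) ! Suc i}" by blast
  show "e \<in> insert {x, y} {{(y # xs) ! i, (y # xs) ! Suc i} |i. Suc i < length (y # xs)}"
  proof (cases i)
    case 0 then show ?thesis using i by simp
  next
    case (Suc j) then show ?thesis using i by auto
  qed
next
  fix e assume "e \<in> insert {x, y} {{(y # xs) ! i, (y # xs) ! Suc i} |i. Suc i < length (y # xs)}"
  then consider "e = {x,y}" | i where "Suc i < length (y # xs)" "e = {(y # xs) ! i, (y # xs) ! Suc i}" by blast
  then show "e \<in> {{(x # y # xs) ! i, (x # y # xs) ! Suc i} |i. Suc i < length (x # y # xs)}"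
  proof cases
    case 1 then show ?thesis by (auto intro!: exI[of _ 0])
  next
    case (2 i) then show ?thesis by (auto intro!: exI[of _ "Suc i"])
  qed
qed

lemma pe_Cons: "xs \<noteq> [] \<Longrightarrow> path_edges (x # xs) = insert {x, hd xs} (path_edges xs)"
  by (cases xs) (auto simp: pe_Cons2)

lemma pe_append: "path_edges (xs @ ys) = path_edges xs \<union> path_edges ys \<union>
   (if xs = [] \<or> ys = [] then {} else {{last xs, hd ys}})"
proof (induction xs)
  case Nil then show ?case by simp
next
  case (Cons x xs)
  show ?case
  proof (cases "xs = []")
    case True
    then show ?thesis by (cases ys) (simp_all add: pe_Cons2)
  next
    case False
    then show ?thesis using Cons by (simp add: pe_Cons)
  qed
qed

lemma pe_rev[simp]: "path_edges (rev xs) = path_edges xs"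
proof (induction xs)
  case Nil then show ?case by simp
next
  case (Cons x xs)
  then show ?case by (cases "xs = []") (simp_all add: pe_append pe_Cons hd_rev last_rev insert_commute)
qed


lemma ed_drop: "m \<le> length xs \<Longrightarrow> j + 1 < length (drop m xs) \<Longrightarrow> ed (drop m xs) j = ed xs (m + j)"
  by (simp add: ed_def)

lemma pe_drop: "path_edges (drop m xs) = ed xs ` {m..<length xs - 1}"
proof (cases "m \<le> length xs")
  case True
  have "path_edges (drop m xs) = ed (drop m xs) ` {..<length xs - m - 1}" by (simp add: pe_image)
  also have "\<dots> = (\<lambda>j. ed xs (m + j)) ` {..<length xs - m - 1}"
    by (rule image_cong) (auto simp: ed_def)
  also have "\<dots> = ed xs ` {m..<length xs - 1}"
  proof -
    have "(\<lambda>j. ed xs (m + j)) ` {..<length xs - m - 1} = ed xs ` ((\<lambda>j. m + j) ` {..<length xs - m - 1})"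
      by (simp add: image_image)
    moreover have "(\<lambda>j. m + j) ` {..<length xs - m - 1} = {m..<length xs - 1}"
    proof (intro equalityI subsetI)
      fix x assume "x \<in> {m..<length xs - 1}"
      then show "x \<in> (\<lambda>j. m + j) ` {..<length xs - m - 1}"
        by (intro image_eqI[of _ _ "x - m"]) auto
    qed auto
    ultimately show ?thesis by simp
  qed
  finally show ?thesis .
next
  case False then show ?thesis by simp
qed

lemma pe_take: "path_edges (take m xs) = ed xs ` {..<min m (length xs) - 1}"
  by (simp add: pe_image ed_def min_def)

lemma pe_seg: "path_edges (drop s (take t xs)) = ed xs ` {s..<min t (length xs) - 1}"
proof -
  have "path_edges (drop s (take t xs)) = ed (take t xs) ` {s..<min t (length xs) - 1}"
    by (simp add: pe_drop min.commute)
  also have "\<dots> = ed xs ` {s..<min t (length xs) - 1}"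
    by (rule image_cong) (auto simp: ed_def)
  finally show ?thesis .
qed

lemma ed_inj:
  assumes "distinct xs" "Suc i < length xs" "Suc j < length xs" "ed xs i = ed xs j"
  shows "i = j"
proof -
  have "(xs!i = xs!j \<and> xs!Suc i = xs!Suc j) \<or> (xs!i = xs!Suc j \<and> xs!Suc i = xs!j)"
    using assms(4) by (auto simp: ed_def doubleton_eq_iff)
  then show ?thesis
    using assms(1-3) by (auto simp: nth_eq_iff_index_eq)
qed

lemma ed_in_set: "Suc i < length xs \<Longrightarrow> ed xs i \<subseteq> set xs"
  by (auto simp: ed_def)


definition cdg :: "'a list \<Rightarrow> nat \<Rightarrow> 'a set" where
  "cdg C j = {C ! j, C ! (Suc j mod length C)}"

lemma ce_image:
  assumes "C \<noteq> []"
  shows "cycle_edges C = cdg C ` {..<length C}"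
proof -
  let ?n = "length C"
  have n: "?n \<ge> 1" using assms by (cases C) auto
  have 1: "{..<?n} = insert (?n - 1) {..<?n - 1}" using n by auto
  have 2: "cdg C ` {..<?n - 1} = ed C ` {..<?n - 1}"
    by (rule image_cong) (auto simp: cdg_def ed_def)
  have 3: "cdg C (?n - 1) = {last C, hd C}"
    using n assms by (simp add: cdg_def last_conv_nth hd_conv_nth)
  show ?thesis unfolding cycle_edges_def pe_image using 1 2 3 by auto
qed

lemma cdg_inj:
  assumes "distinct C" "3 \<le> length C" "i < length C" "j < length C" "cdg C i = cdg C j"
  shows "i = j"
proof -
  let ?n = "length C"
  have n0: "0 < ?n" using assms(3) by linarith
  have a: "Suc i mod ?n < ?n" "Suc j mod ?n < ?n" using n0 by (rule mod_less_divisor)+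
  have "(C!i = C!j \<and> C!(Suc i mod ?n) = C!(Suc j mod ?n)) \<or> (C!i = C!(Suc j mod ?n) \<and> C!(Suc i mod ?n) = C!j)"
    using assms(5) by (auto simp: cdg_def doubleton_eq_iff)
  then have "i = j \<or> (i = Suc j mod ?n \<and> Suc i mod ?n = j)"
    using assms a by (auto simp: nth_eq_iff_index_eq)
  then show ?thesis
  proof
    assume h: "i = Suc j mod ?n \<and> Suc i mod ?n = j"
    show ?thesis
    proof (cases "Suc j < ?n")
      case True
      then have i: "i = Suc j" using h by simp
      have "Suc (Suc j) mod ?n = j" using h i by simp
      moreover have "Suc (Suc j) < ?n \<or> Suc (Suc j) = ?n" using True by linarith
      ultimately show ?thesis using assms(2) by auto
    next
      case False
      then have "Suc j = ?n" using assms by simp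
      then have "i = 0" using h by simp
      moreover have "Suc 0 mod ?n = Suc 0" using assms(2) by (intro mod_less) linarith
      ultimately have "j = 1" using h by (metis One_nat_def)
      then show ?thesis using \<open>Suc j = ?n\<close> assms(2) by simp
    qed
  qed simp
qed

lemma ce_mod:
  assumes "C \<noteq> []"
  shows "{C ! (m mod length C), C ! (Suc m mod length C)} \<in> cycle_edges C"
proof -
  have "{C ! (m mod length C), C ! (Suc m mod length C)} = cdg C (m mod length C)"
    by (simp add: cdg_def mod_Suc_eq)
  moreover have "m mod length C < length C" using assms by simp
  ultimately show ?thesis using ce_image[OF assms] by auto
qed




declare upt_Suc[simp del]

locale cfg =
  fixes k n :: nat and C P :: "'a list"
  assumes k3: "k \<ge> 3" and nk: "n = 2 * k"
    and Cd: "distinct C" and Cl: "length C = n"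
    and Pd: "distinct P" and Pl: "length P = n + 1"
    and disj: "cycle_edges C \<inter> path_edges P = {}"
    and gir: "girth (cycle_edges C \<union> path_edges P) \<ge> enat (n - 2)"
begin

abbreviation "H \<equiv> cycle_edges C \<union> path_edges P"

lemma Cne: "C \<noteq> []" using Cl nk k3 by auto
lemma n6: "n \<ge> 6" using nk k3 by simp

lemma cyc_mod: "{C ! (m mod n), C ! (Suc m mod n)} \<in> cycle_edges C"
  using ce_mod[OF Cne] Cl by simp

lemma girth_le:
  assumes "is_cycle cs" "cycle_edges cs \<subseteq> H"
  shows "n - 2 \<le> length cs"
proof -
  have "girth H \<le> enat (cycle_length cs)"
    unfolding girth_def using assms by (auto intro!: Inf_lower)
  then have "enat (n - 2) \<le> enat (length cs)" using gir unfolding cycle_length_def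
    by (rule order_trans[rotated])
  then show ?thesis by simp
qed

lemma mod_diff_lem:
  assumes "(y + a) mod n = (y + b) mod (n::nat)" "a \<le> l" "b \<le> l" "l < n"
  shows "a = b"
proof (rule ccontr)
  assume ne: "a \<noteq> b"
  { fix a b :: nat assume e: "(y + a) mod n = (y + b) mod n" and ab: "a < b" and bl: "b < n"
    then have "n dvd (y + b) - (y + a)" using mod_eq_dvd_iff_nat[of "y+a" "y+b" n] by simp
    then have "n dvd b - a" by simp
    moreover have "0 < b - a" "b - a < n" using ab bl by auto
    ultimately have False using nat_dvd_not_less by blast }
  note * = this
  show False using ne assms *[of a b] *[of b a] by (cases "a < b") auto
qed

lemma GL:
  assumes Ld: "distinct L" and L2: "length L \<ge> 2" and LH: "path_edges L \<subseteq> H"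
    and hdL: "hd L = C ! ((y + l) mod n)" and lastL: "last L = C ! (y mod n)"
    and l1: "1 \<le> l" and ln: "l < n"
    and avoid: "\<And>m. 1 \<le> m \<Longrightarrow> m < l \<Longrightarrow> C ! ((y + m) mod n) \<notin> set L"
    and len4: "4 \<le> length L + l"
  shows "n - 2 \<le> length L + l - 1"
proof -
  define arc where "arc = map (\<lambda>m. C ! ((y + m) mod n)) [1..<l+1]"
  define cs where "cs = arc @ tl L"
  have arcne: "arc \<noteq> []" using l1 by (simp add: arc_def)
  have tlne: "tl L \<noteq> []" using L2 by (cases L) auto
  have lastarc: "last arc = hd L" using l1 hdL by (simp add: arc_def last_map)
  have hdarc: "hd arc = C ! ((y + 1) mod n)" using l1 by (simp add: arc_def upt_conv_Cons del: upt_Suc)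
  have lencs: "length cs = length L + l - 1" using L2 l1 by (simp add: cs_def arc_def)
  have darc: "distinct arc"
    unfolding arc_def distinct_map
  proof
    show "distinct [1..<l+1]" by simp
    show "inj_on (\<lambda>m. C ! ((y + m) mod n)) (set [1..<l + 1])"
    proof (rule inj_onI)
      fix a b assume a: "a \<in> set [1..<l + 1]" and b: "b \<in> set [1..<l + 1]"
        and eq: "C ! ((y + a) mod n) = C ! ((y + b) mod n)"
      have n0: "0 < n" using n6 by simp
      have "(y + a) mod n = (y + b) mod n"
        using eq Cd Cl n0 by (simp add: nth_eq_iff_index_eq)
      moreover have "a \<le> l" "b \<le> l" using a b by auto
      ultimately show "a = b" using ln mod_diff_lem by blast
    qed
  qed
  have dtl: "distinct (tl L)" using Ld by (cases L) auto
  have disj2: "set arc \<inter> set (tl L) = {}"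
  proof -
    { fix m assume m: "m \<in> {1..<l+1}" and mem: "C ! ((y + m) mod n) \<in> set (tl L)"
      have "m < l \<or> m = l" using m by auto
      then have False
      proof
        assume "m < l" then show False using avoid[of m] m mem by (cases L) auto
      next
        assume "m = l" then have "hd L \<in> set (tl L)" using mem hdL by simp
        then show False using Ld by (cases L) auto
      qed }
    then show ?thesis unfolding arc_def set_map set_upt by blast
  qed
  have dcs: "distinct cs" using darc dtl disj2 by (simp add: cs_def)
  have pearc: "path_edges arc \<subseteq> cycle_edges C"
  proof
    fix e assume "e \<in> path_edges arc"
    then obtain j where j: "Suc j < length arc" "e = ed arc j" unfolding pe_image by force
    then have "e = {C ! ((y + Suc j) mod n), C ! (Suc (y + Suc j) mod n)}"
      by (simp add: arc_def ed_def nth_append)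
    then show "e \<in> cycle_edges C" using cyc_mod by simp
  qed
  have pecs: "path_edges cs = path_edges arc \<union> path_edges L"
  proof -
    have "path_edges L = insert {hd L, hd (tl L)} (path_edges (tl L))"
      using tlne by (cases L) (auto simp: pe_Cons)
    then show ?thesis using arcne tlne lastarc by (auto simp: cs_def pe_append)
  qed
  have clos: "{last cs, hd cs} \<in> cycle_edges C"
  proof -
    have "last cs = last L" using tlne by (cases L) (auto simp: cs_def)
    moreover have "hd cs = hd arc" using arcne by (simp add: cs_def)
    ultimately have "{last cs, hd cs} = {C ! (y mod n), C ! (Suc y mod n)}"
      using lastL hdarc by simp
    then show ?thesis using cyc_mod by simp
  qed
  have "is_cycle cs" using dcs lencs len4 by (simp add: is_cycle_def)
  moreover have "cycle_edges cs \<subseteq> H"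
    using pecs pearc LH clos by (auto simp: cycle_edges_def)
  ultimately have "n - 2 \<le> length cs" by (rule girth_le)
  then show ?thesis using lencs by simp
qed


lemma seg_facts:
  assumes "s \<le> t" "t \<le> n"
  defines "seg \<equiv> drop s (take (Suc t) P)"
  shows "distinct seg" "length seg = t - s + 1" "path_edges seg \<subseteq> path_edges P"
    "hd seg = P ! s" "last seg = P ! t" "set seg = (\<lambda>u. P ! u) ` {s..t}"
proof -
  show "distinct seg" using Pd by (simp add: seg_def distinct_drop distinct_take)
  show l: "length seg = t - s + 1" using assms Pl by (simp add: seg_def)
  have "path_edges seg = ed P ` {s..<t}" unfolding seg_def pe_seg using assms Pl by (simp add: min_def)
  moreover have "path_edges P = ed P ` {..<n}" using Pl by (simp add: pe_image)
  ultimately show "path_edges seg \<subseteq> path_edges P" using assms by auto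
  show "hd seg = P ! s" using assms Pl by (simp add: seg_def hd_drop_conv_nth)
  show "last seg = P ! t" using assms Pl l by (simp add: seg_def last_conv_nth)
  show "set seg = (\<lambda>u. P ! u) ` {s..t}"
  proof -
    have "set seg = {seg ! i | i. i < length seg}" by (simp add: set_conv_nth)
    also have "\<dots> = {P ! (s + i) | i. i < t - s + 1}"
    proof -
      have "\<And>i. i < t - s + 1 \<Longrightarrow> seg ! i = P ! (s + i)" using assms Pl by (simp add: seg_def)
      then show ?thesis using l by metis
    qed
    also have "\<dots> = (\<lambda>u. P ! u) ` {s..t}"
    proof (intro equalityI subsetI)
      fix x assume "x \<in> {P ! (s + i) | i. i < t - s + 1}"
      then show "x \<in> (\<lambda>u. P ! u) ` {s..t}" using assms by force
    next
      fix x assume "x \<in> (\<lambda>u. P ! u) ` {s..t}"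
      then obtain u where "u \<in> {s..t}" "x = P ! u" by auto
      then show "x \<in> {P ! (s + i) | i. i < t - s + 1}" by (intro CollectI exI[of _ "u - s"]) auto
    qed
    finally show ?thesis .
  qed
qed

lemma GL2:
  assumes st: "s < t" "t \<le> n" and ps: "P ! s = C ! x" "x < n" and pt: "P ! t = C ! y" "y < n"
    and arc: "(a = x \<and> b = y) \<or> (a = y \<and> b = x)" and ab: "(a + l) mod n = b"
    and l1: "1 \<le> l" and ln: "l < n"
    and avoid: "\<And>m u. 1 \<le> m \<Longrightarrow> m < l \<Longrightarrow> s < u \<Longrightarrow> u < t \<Longrightarrow> C ! ((a + m) mod n) \<noteq> P ! u"
  shows "n - 2 \<le> (t - s) + l"
proof -
  define seg where "seg = drop s (take (Suc t) P)"
  note sf = seg_facts[of s t, folded seg_def]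
  have sd: "distinct seg" and sl: "length seg = t - s + 1" and spe: "path_edges seg \<subseteq> path_edges P"
    and shd: "hd seg = P ! s" and slast: "last seg = P ! t" and sset: "set seg = (\<lambda>u. P ! u) ` {s..t}"
    using sf st by auto
  have n0: "0 < n" using n6 by simp
  have len4: "4 \<le> length seg + l"
  proof (rule ccontr)
    assume "\<not> 4 \<le> length seg + l"
    then have t1: "t = Suc s" and ll: "l = 1" using sl st l1 by auto
    have "{P ! s, P ! Suc s} \<in> path_edges P" using st t1 Pl unfolding path_edges_def by auto
    moreover have "{P ! s, P ! Suc s} = {C ! (a mod n), C ! (Suc a mod n)}"
      using arc ab ll ps pt t1 by (auto simp: mod_less)
    ultimately show False using cyc_mod[of a] disj by auto
  qed
  have amod: "a mod n = a" using arc ps pt by auto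
  have noend: "C ! ((a + m) mod n) \<noteq> C ! a \<and> C ! ((a + m) mod n) \<noteq> C ! b" if "1 \<le> m" "m < l" for m
  proof -
    have d: "i < n \<Longrightarrow> j < n \<Longrightarrow> C ! i = C ! j \<Longrightarrow> i = j" for i j using Cd Cl by (simp add: nth_eq_iff_index_eq)
    have "(a + m) mod n \<noteq> (a + 0) mod n" using mod_diff_lem[of a m 0 l] that ln by auto
    moreover have "(a + m) mod n \<noteq> (a + l) mod n" using mod_diff_lem[of a m l l] that ln by auto
    ultimately show ?thesis using d n0 amod ab arc ps pt by auto
  qed
  have av: "C ! ((a + m) mod n) \<notin> set seg" if "1 \<le> m" "m < l" for m
  proof
    assume "C ! ((a + m) mod n) \<in> set seg"
    then obtain u where u: "u \<in> {s..t}" "C ! ((a + m) mod n) = P ! u" using sset by auto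
    show False
    proof (cases "u = s \<or> u = t")
      case True then show False using noend[OF that] u arc ps pt by auto
    next
      case False then show False using avoid[OF that, of u] u by auto
    qed
  qed
  from arc show ?thesis
  proof
    assume h: "a = x \<and> b = y"
    have "n - 2 \<le> length (rev seg) + l - 1"
    proof (rule GL[of "rev seg" a l])
      show "distinct (rev seg)" using sd by simp
      show "2 \<le> length (rev seg)" using sl st by simp
      show "path_edges (rev seg) \<subseteq> H" using spe by auto
      show "hd (rev seg) = C ! ((a + l) mod n)" using slast pt ab h by (simp add: hd_rev)
      show "last (rev seg) = C ! (a mod n)" using shd ps h amod by (simp add: last_rev)
      show "1 \<le> l" "l < n" by (fact l1, fact ln)
      show "\<And>m. 1 \<le> m \<Longrightarrow> m < l \<Longrightarrow> C ! ((a + m) mod n) \<notin> set (rev seg)" using av by simp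
      show "4 \<le> length (rev seg) + l" using len4 by simp
    qed
    then show ?thesis using sl by simp
  next
    assume h: "a = y \<and> b = x"
    have "n - 2 \<le> length seg + l - 1"
    proof (rule GL[of seg a l])
      show "distinct seg" using sd by simp
      show "2 \<le> length seg" using sl st by simp
      show "path_edges seg \<subseteq> H" using spe by auto
      show "hd seg = C ! ((a + l) mod n)" using shd ps ab h by simp
      show "last seg = C ! (a mod n)" using slast pt h amod by simp
      show "1 \<le> l" "l < n" by (fact l1, fact ln)
      show "\<And>m. 1 \<le> m \<Longrightarrow> m < l \<Longrightarrow> C ! ((a + m) mod n) \<notin> set seg" using av by simp
      show "4 \<le> length seg + l" using len4 by simp
    qed
    then show ?thesis using sl by simp
  qed
qed


lemma PE_all: "path_edges P = ed P ` {..<n}" using Pl by (simp add: pe_image)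
lemma CE_all: "cycle_edges C = cdg C ` {..<n}" using ce_image[OF Cne] Cl by simp

lemma ed_P_inj: "inj_on (ed P) {..<n}"
proof (rule inj_onI)
  fix x y assume "x \<in> {..<n}" "y \<in> {..<n}" "ed P x = ed P y"
  then show "x = y" using ed_inj[OF Pd, of x y] Pl by simp
qed
lemma cdg_C_inj: "inj_on (cdg C) {..<n}"
proof (rule inj_onI)
  fix x y assume "x \<in> {..<n}" "y \<in> {..<n}" "cdg C x = cdg C y"
  then show "x = y" using cdg_inj[OF Cd, of x y] Cl n6 by simp
qed

lemma decomp:
  assumes p: "is_path p1" "is_path p2"
    and e1: "path_edges p1 = ed P ` A1 \<union> cdg C ` B1"
    and e2: "path_edges p2 = ed P ` A2 \<union> cdg C ` B2"
    and a: "A1 \<union> A2 = {..<n}" "A1 \<inter> A2 = {}" and b: "B1 \<union> B2 = {..<n}" "B1 \<inter> B2 = {}"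
  shows "decomposes_into_two_paths H p1 p2"
proof -
  have A: "A1 \<subseteq> {..<n}" "A2 \<subseteq> {..<n}" using a(1) by blast+
  have B: "B1 \<subseteq> {..<n}" "B2 \<subseteq> {..<n}" using b(1) by blast+
  have i1: "ed P ` A1 \<inter> ed P ` A2 = {}"
    using inj_on_image_Int[OF ed_P_inj A(1,2)] a(2) by (simp only: image_empty)
  have i2: "cdg C ` B1 \<inter> cdg C ` B2 = {}"
    using inj_on_image_Int[OF cdg_C_inj B(1,2)] b(2) by (simp only: image_empty)
  have dd: "ed P ` {..<n} \<inter> cdg C ` {..<n} = {}" using disj unfolding PE_all CE_all by (simp add: Int_commute)
  have i3: "ed P ` A1 \<inter> cdg C ` B2 = {}"
  proof -
    have "ed P ` A1 \<inter> cdg C ` B2 \<subseteq> ed P ` {..<n} \<inter> cdg C ` {..<n}"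
      by (intro Int_mono image_mono A(1) B(2))
    then show ?thesis using dd by (simp only: subset_empty)
  qed
  have i4: "ed P ` A2 \<inter> cdg C ` B1 = {}"
  proof -
    have "ed P ` A2 \<inter> cdg C ` B1 \<subseteq> ed P ` {..<n} \<inter> cdg C ` {..<n}"
      by (intro Int_mono image_mono A(2) B(1))
    then show ?thesis using dd by (simp only: subset_empty)
  qed
  have un: "path_edges p1 \<union> path_edges p2 = H"
  proof -
    have "path_edges p1 \<union> path_edges p2 = ed P ` (A1 \<union> A2) \<union> cdg C ` (B1 \<union> B2)"
      unfolding e1 e2 image_Un by (simp add: Un_ac)
    then show ?thesis using a(1) b(1) PE_all CE_all by (simp add: Un_commute)
  qed
  have int: "path_edges p1 \<inter> path_edges p2 = {}"
    unfolding e1 e2 Int_Un_distrib Int_Un_distrib2 using i1 i2 i3 i4 by (simp add: Int_commute)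
  show ?thesis unfolding decomposes_into_two_paths_def using p un int by blast
qed

lemma Fcon:
  assumes hdC: "P ! i = C ! 0" and ik: "i \<le> k"
    and first: "\<And>t. t < i \<Longrightarrow> P ! t \<notin> set C"
    and later: "\<And>u j. i < u \<Longrightarrow> u \<le> n \<Longrightarrow> j < n \<Longrightarrow> P ! u = C ! j \<Longrightarrow> j + max 2 i \<le> n"
  shows "\<exists>p1 p2. decomposes_into_two_paths H p1 p2 \<and> path_length p1 \<in> {n - 1, n, n + 1}
            \<and> path_length p2 \<in> {n - 1, n, n + 1}"
proof -
  define a where "a = n + 1 - max 2 i"
  have a1: "1 \<le> a" "a \<le> n - 1" "a + max 2 i = n + 1" using n6 ik nk by (auto simp: a_def)
  define p1 where "p1 = take i P @ take (a + 1) C"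
  define p2 where "p2 = drop a C @ drop i P"
  have iP: "i < length P" using ik nk Pl by simp
  have d1: "distinct p1" using Pd Cd first unfolding p1_def
    by (auto simp: distinct_take in_set_conv_nth)
  have d2: "distinct p2"
  proof -
    have "x \<notin> set (drop i P)" if x: "x \<in> set (drop a C)" for x
    proof
      assume "x \<in> set (drop i P)"
      then obtain u where u: "i \<le> u" "u < length P" "x = P ! u"
        by (auto simp: in_set_conv_nth) (metis add.commute le_add2 less_diff_conv)
      obtain j where j: "a \<le> j" "j < n" "x = C ! j" using x Cl
        by (auto simp: in_set_conv_nth) (metis add.commute le_add2 less_diff_conv)
      show False
      proof (cases "u = i")
        case True
        then have "C ! j = C ! 0" using u j hdC by simp
        then have "j = 0" using Cd Cl j n6 by (simp add: nth_eq_iff_index_eq)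
        then show False using j a1 by simp
      next
        case False
        then have "j + max 2 i \<le> n" using later[of u j] u j Pl by simp
        then show False using j a1 by simp
      qed
    qed
    then show ?thesis using Pd Cd unfolding p2_def by (auto simp: distinct_drop)
  qed
  have ne1: "p1 \<noteq> []" and ne2: "p2 \<noteq> []" using a1 Cl iP by (auto simp: p1_def p2_def)
  have l1: "length p1 = i + a + 1" using a1 Cl iP by (simp add: p1_def)
  have l2: "length p2 = n - a + n + 1 - i" using a1 Cl iP Pl by (simp add: p2_def)
  have e1: "path_edges p1 = ed P ` {..<i} \<union> cdg C ` {..<a}"
  proof -
    have pc: "path_edges (take (a + 1) C) = cdg C ` {..<a}"
      unfolding pe_take using a1 Cl by (auto simp: min_def cdg_def ed_def intro!: image_cong)
    show ?thesis
    proof (cases "i = 0")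
      case True then show ?thesis using pc by (simp add: p1_def)
    next
      case False
      have "path_edges (take i P) = ed P ` {..<i - 1}" using iP by (simp add: pe_take min_def)
      moreover have "{last (take i P), hd (take (a + 1) C)} = ed P (i - 1)"
      proof -
        have "take i P \<noteq> []" using False iP by (cases P) auto
        then have "last (take i P) = take i P ! (i - 1)" using iP by (simp add: last_conv_nth)
        then have "last (take i P) = P ! (i - 1)" using False by simp
        moreover have "hd (take (a + 1) C) = C ! 0" using Cne by (simp add: hd_conv_nth)
        ultimately show ?thesis using False hdC by (simp add: ed_def)
      qed
      moreover have "{..<i} = insert (i - 1) {..<i - 1}" using False by auto
      moreover have "take i P \<noteq> []" "take (a + 1) C \<noteq> []" using False iP Cne by (cases P; auto)+
      ultimately show ?thesis using pc unfolding p1_def pe_append by auto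
    qed
  qed
  have e2: "path_edges p2 = ed P ` {i..<n} \<union> cdg C ` {a..<n}"
  proof -
    have pc: "path_edges (drop a C) = cdg C ` {a..<n - 1}"
      unfolding pe_drop using a1 Cl by (auto simp: cdg_def ed_def intro!: image_cong)
    have pp: "path_edges (drop i P) = ed P ` {i..<n}" using Pl by (simp add: pe_drop)
    have cl: "{last (drop a C), hd (drop i P)} = cdg C (n - 1)"
      using a1 Cl iP hdC n6 by (simp add: last_conv_nth hd_drop_conv_nth cdg_def)
    have "{a..<n} = insert (n - 1) {a..<n - 1}" using a1 by auto
    then show ?thesis using pc pp cl a1 Cl iP by (auto simp: p2_def pe_append)
  qed
  have "decomposes_into_two_paths H p1 p2"
  proof (rule decomp[OF _ _ e1 e2])
    show "is_path p1" using d1 ne1 by (simp add: is_path_def)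
    show "is_path p2" using d2 ne2 by (simp add: is_path_def)
    show "{..<i} \<union> {i..<n} = {..<n}" using ik nk by auto
    show "{..<i} \<inter> {i..<n} = {}" by auto
    show "{..<a} \<union> {a..<n} = {..<n}" using a1 by auto
    show "{..<a} \<inter> {a..<n} = {}" by auto
  qed
  moreover have "path_length p1 \<in> {n - 1, n, n + 1}"
  proof (cases "i \<le> 1")
    case True then show ?thesis using l1 a1 unfolding path_length_def by (auto simp: max_def)
  next
    case False then show ?thesis using l1 a1 unfolding path_length_def by (auto simp: max_def)
  qed
  moreover have "path_length p2 \<in> {n - 1, n, n + 1}"
  proof (cases "i \<le> 1")
    case True then show ?thesis using l2 a1 unfolding path_length_def by (auto simp: max_def)
  next
    case False then show ?thesis using l2 a1 unfolding path_length_def by (auto simp: max_def)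
  qed
  ultimately show ?thesis by blast
qed


lemma Gcon:
  assumes hdC: "hd C = P ! l" and lastC: "last C = P ! j" and l1: "l \<le> 1" and lj: "l < j" and jn: "j \<le> n"
    and first: "\<And>t. t < l \<Longrightarrow> P ! t \<notin> set C" and pj: "P ! (j - 1) \<notin> set C"
  shows "\<exists>p1 p2. decomposes_into_two_paths H p1 p2 \<and> path_length p1 \<in> {n - 1, n, n + 1}
            \<and> path_length p2 \<in> {n - 1, n, n + 1}"
proof -
  define p1 where "p1 = take l P @ C @ [P ! (j - 1)]"
  define p2 where "p2 = rev (drop j P) @ drop l (take j P)"
  have lP: "l < length P" "j < length P" using lj jn Pl by auto
  have d1: "distinct p1"
  proof -
    have "P ! (j - 1) \<notin> set (take l P)"
    proof
      assume "P ! (j - 1) \<in> set (take l P)"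
      then obtain t where "t < l" "P ! t = P ! (j - 1)" using lP by (auto simp: in_set_conv_nth)
      then show False using Pd lP lj by (simp add: nth_eq_iff_index_eq)
    qed
    moreover have "set (take l P) \<inter> set C = {}"
      using first lP by (auto simp: in_set_conv_nth)
    ultimately show ?thesis using Pd Cd pj unfolding p1_def by (auto simp: distinct_take)
  qed
  have d2: "distinct p2"
  proof -
    have "drop l (take j P) @ drop j P = drop l P"
    proof -
      have "drop l P = drop l (take j P @ drop j P)" by simp
      also have "\<dots> = drop l (take j P) @ drop j P" using lj lP by (simp add: drop_append del: append_take_drop_id)
      finally show ?thesis by (rule sym)
    qed
    then have "distinct (drop l (take j P) @ drop j P)" using Pd by (simp add: distinct_drop)
    then show ?thesis unfolding p2_def by auto
  qed
  have ne1: "p1 \<noteq> []" and ne2: "p2 \<noteq> []" using lP by (auto simp: p1_def p2_def)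
  have len1: "length p1 = l + n + 1" using lP Cl by (simp add: p1_def)
  have len2: "length p2 = n + 1 - l" using lP lj Pl by (simp add: p2_def)
  have cC: "path_edges C = cdg C ` {..<n - 1}"
    unfolding pe_image Cl using Cl by (auto simp: cdg_def ed_def intro!: image_cong)
  have eC: "path_edges (C @ [P ! (j - 1)]) = cdg C ` {..<n - 1} \<union> {ed P (j - 1)}"
  proof -
    have "{last C, P ! (j - 1)} = ed P (j - 1)" using lastC lj by (simp add: ed_def insert_commute)
    then show ?thesis using cC Cne by (simp add: pe_append)
  qed
  have e1: "path_edges p1 = ed P ` ({..<l} \<union> {j - 1}) \<union> cdg C ` {..<n - 1}"
  proof (cases "l = 0")
    case True then show ?thesis using eC by (auto simp: p1_def)
  next
    case False
    then have l: "l = 1" using l1 by simp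
    have "take l P = [P ! 0]" using l lP by (cases P) auto
    then have "path_edges p1 = insert {P ! 0, hd C} (path_edges (C @ [P ! (j - 1)]))"
      using Cne by (simp add: p1_def pe_Cons)
    moreover have "{P ! 0, hd C} = ed P 0" using hdC l by (simp add: ed_def)
    ultimately show ?thesis using eC l by auto
  qed
  have e2: "path_edges p2 = ed P ` ({l..<j - 1} \<union> {j..<n}) \<union> cdg C ` {n - 1}"
  proof -
    have a: "path_edges (rev (drop j P)) = ed P ` {j..<n}" using Pl by (simp add: pe_drop)
    have b: "path_edges (drop l (take j P)) = ed P ` {l..<j - 1}" using Pl lP by (simp add: pe_seg min_def)
    have r1: "rev (drop j P) \<noteq> []" "drop l (take j P) \<noteq> []" using lP lj by auto
    have c: "{last (rev (drop j P)), hd (drop l (take j P))} = cdg C (n - 1)"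
    proof -
      have "last (rev (drop j P)) = P ! j" using lP by (simp add: last_rev hd_drop_conv_nth)
      moreover have "hd (drop l (take j P)) = P ! l" using lP lj by (simp add: hd_drop_conv_nth)
      moreover have "cdg C (n - 1) = {last C, hd C}"
        using Cl n6 Cne by (simp add: cdg_def last_conv_nth hd_conv_nth)
      ultimately show ?thesis using hdC lastC by auto
    qed
    show ?thesis unfolding p2_def pe_append using a b c r1 by auto
  qed
  have "decomposes_into_two_paths H p1 p2"
  proof (rule decomp[OF _ _ e1 e2])
    show "is_path p1" using d1 ne1 by (simp add: is_path_def)
    show "is_path p2" using d2 ne2 by (simp add: is_path_def)
    show "{..<l} \<union> {j - 1} \<union> ({l..<j - 1} \<union> {j..<n}) = {..<n}" using lj jn by auto
    show "({..<l} \<union> {j - 1}) \<inter> ({l..<j - 1} \<union> {j..<n}) = {}" using lj by auto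
    show "{..<n - 1} \<union> {n - 1} = {..<n}" using n6 by auto
    show "{..<n - 1} \<inter> {n - 1} = {}" by auto
  qed
  moreover have "path_length p1 \<in> {n - 1, n, n + 1}" using len1 l1 unfolding path_length_def by auto
  moreover have "path_length p2 \<in> {n - 1, n, n + 1}" using len2 l1 unfolding path_length_def by auto
  ultimately show ?thesis by blast
qed

end



lemma ce_rev: "cycle_edges (rev C) = cycle_edges C"
  by (cases "C = []") (auto simp: cycle_edges_def hd_rev last_rev)

lemma ce_rotate1: "cycle_edges (rotate1 C) = cycle_edges C"
proof (cases C)
  case Nil then show ?thesis by simp
next
  case (Cons x xs)
  show ?thesis
  proof (cases "xs = []")
    case True then show ?thesis using Cons by simp
  next
    case False
    then show ?thesis using Cons by (auto simp: cycle_edges_def pe_append pe_Cons)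
  qed
qed

lemma ce_rotate: "cycle_edges (rotate m C) = cycle_edges C"
  by (induction m) (simp_all add: ce_rotate1)

definition refl :: "'a list \<Rightarrow> 'a list" where
  "refl C = hd C # rev (tl C)"

lemma ce_refl: assumes "C \<noteq> []" shows "cycle_edges (refl C) = cycle_edges C"
proof (cases C)
  case Nil then show ?thesis using assms by simp
next
  case (Cons x xs)
  show ?thesis
  proof (cases "xs = []")
    case True then show ?thesis using Cons by (simp add: refl_def)
  next
    case False
    then show ?thesis using Cons
      by (auto simp: cycle_edges_def refl_def pe_append pe_Cons hd_rev last_rev)
  qed
qed

lemma refl_facts:
  assumes "C \<noteq> []" "distinct C"
  shows "distinct (refl C)" "length (refl C) = length C" "set (refl C) = set C" "refl C ! 0 = C ! 0"
    "\<And>j. 1 \<le> j \<Longrightarrow> j < length C \<Longrightarrow> refl C ! j = C ! (length C - j)"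
proof -
  obtain x xs where C: "C = x # xs" using assms by (cases C) auto
  show "distinct (refl C)" "length (refl C) = length C" "set (refl C) = set C" "refl C ! 0 = C ! 0"
    using assms C by (auto simp: refl_def)
  fix j assume j: "1 \<le> j" "j < length C"
  then obtain j' where j': "j = Suc j'" by (cases j) auto
  have "refl C ! j = rev xs ! j'" using C j' by (simp add: refl_def)
  also have "\<dots> = xs ! (length xs - Suc j')" using j j' C by (simp add: rev_nth)
  also have "\<dots> = C ! (length C - j)" using j j' C
    by (simp add: Suc_diff_Suc)
  finally show "refl C ! j = C ! (length C - j)" .
qed

lemma reroot:
  assumes Cd: "distinct C" and C3: "3 \<le> length C" and e: "{a, b} \<in> cycle_edges C" and ab: "a \<noteq> b"
  shows "\<exists>C'. distinct C' \<and> length C' = length C \<and> set C' = set C \<and> cycle_edges C' = cycle_edges C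
           \<and> hd C' = a \<and> last C' = b"
proof -
  let ?n = "length C"
  have Cne: "C \<noteq> []" using C3 by auto
  obtain m where m: "m < ?n" "{a, b} = cdg C m" using e ce_image[OF Cne] by auto
  define C1 where "C1 = rotate (Suc m) C"
  have C1f: "distinct C1" "length C1 = ?n" "set C1 = set C" "cycle_edges C1 = cycle_edges C"
    using Cd by (simp_all only: C1_def ce_rotate distinct_rotate length_rotate set_rotate)
  have C1ne: "C1 \<noteq> []" using C1f Cne by auto
  have hd1: "hd C1 = C ! (Suc m mod ?n)" unfolding C1_def by (rule hd_rotate_conv_nth[OF Cne])
  have last1: "last C1 = C ! m"
  proof -
    have "last C1 = C1 ! (?n - 1)" using C1f C1ne by (simp add: last_conv_nth)
    also have "\<dots> = C ! ((Suc m + (?n - 1)) mod ?n)" unfolding C1_def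
      by (rule nth_rotate) (use Cne in simp)
    also have "(Suc m + (?n - 1)) mod ?n = m" using m Cne by simp
    finally show ?thesis .
  qed
  from m(2) have "(a = C ! m \<and> b = C ! (Suc m mod ?n)) \<or> (a = C ! (Suc m mod ?n) \<and> b = C ! m)"
    by (auto simp: cdg_def doubleton_eq_iff)
  then show ?thesis
  proof
    assume h: "a = C ! m \<and> b = C ! (Suc m mod ?n)"
    show ?thesis
      by (rule exI[of _ "rev C1"]) (use C1f C1ne hd1 last1 h in \<open>simp add: ce_rev hd_rev last_rev\<close>)
  next
    assume h: "a = C ! (Suc m mod ?n) \<and> b = C ! m"
    show ?thesis by (rule exI[of _ C1]) (use C1f hd1 last1 h in simp)
  qed
qed

context cfg begin

lemma cfg_C:
  assumes "distinct C'" "length C' = n" "cycle_edges C' = cycle_edges C"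
  shows "cfg k n C' P"
  using assms k3 nk Pd Pl disj gir by unfold_locales auto

lemma cfg_revP: "cfg k n C (rev P)"
  using k3 nk Cd Cl Pd Pl disj gir by unfold_locales auto

definition inW :: "nat \<Rightarrow> nat \<Rightarrow> bool" where
  "inW r j \<longleftrightarrow> j \<le> r \<or> n - r \<le> j"

definition wlen :: "nat \<Rightarrow> nat \<Rightarrow> nat \<Rightarrow> nat" where
  "wlen r x y = (if (x \<le> r) = (y \<le> r) then max x y - min x y
                 else if x \<le> r then x + (n - y) else y + (n - x))"

lemma GLW:
  assumes r: "2 * r < n" and st: "s < t" "t \<le> n"
    and ps: "P ! s = C ! x" "x < n" and pt: "P ! t = C ! y" "y < n" and xy: "x \<noteq> y"
    and wx: "inW r x" and wy: "inW r y"
    and mid: "\<And>u j. s < u \<Longrightarrow> u < t \<Longrightarrow> j < n \<Longrightarrow> P ! u = C ! j \<Longrightarrow> j \<noteq> 0 \<Longrightarrow> \<not> inW r j"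
    and mid0: "\<And>u. s < u \<Longrightarrow> u < t \<Longrightarrow> P ! u \<noteq> C ! 0"
  shows "n - 2 \<le> t - s + wlen r x y"
proof -
  have key: "n - 2 \<le> t - s + l"
    if arc: "(a = x \<and> b = y) \<or> (a = y \<and> b = x)" and ab: "(a + l) mod n = b"
      and l1: "1 \<le> l" and ln: "l < n" and inw: "\<And>m. 1 \<le> m \<Longrightarrow> m < l \<Longrightarrow> inW r ((a + m) mod n)"
    for a b l
  proof (rule GL2[OF st ps pt arc ab l1 ln])
    fix m u assume m: "1 \<le> m" "m < l" and u: "s < u" "u < t"
    show "C ! ((a + m) mod n) \<noteq> P ! u"
    proof
      assume eq: "C ! ((a + m) mod n) = P ! u"
      have jn: "(a + m) mod n < n" using n6 by simp
      show False
      proof (cases "(a + m) mod n = 0")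
        case True then show False using mid0[OF u] eq by simp
      next
        case False then show False using mid[OF u jn eq[symmetric] False] inw[OF m] by simp
      qed
    qed
  qed
  have r': "r < n" using r by simp
  consider (ss) "x \<le> r" "y \<le> r" | (bb) "\<not> x \<le> r" "\<not> y \<le> r" | (sb) "x \<le> r" "\<not> y \<le> r" | (bs) "\<not> x \<le> r" "y \<le> r"
    by blast
  then show ?thesis
  proof cases
    case ss
    show ?thesis
    proof (cases "x < y")
      case True
      have "n - 2 \<le> t - s + (y - x)"
      proof (rule key[of x y "y - x"])
        show "(x + (y - x)) mod n = y" using True ss r' ps pt by simp
        show "1 \<le> y - x" using True ss r' ps pt by simp
        show "y - x < n" using True ss r' ps pt by simp
        fix m assume m: "1 \<le> m" "m < y - x"
        then have "(x + m) mod n = x + m" using True ss r' ps pt by simp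
        then show "inW r ((x + m) mod n)" using m True ss r' ps pt by (simp only: inW_def) linarith
      qed simp
      then show ?thesis using ss True by (simp add: wlen_def)
    next
      case False
      have "n - 2 \<le> t - s + (x - y)"
      proof (rule key[of y x "x - y"])
        show "(y + (x - y)) mod n = x" using False xy ss r' ps pt by simp
        show "1 \<le> x - y" using False xy ss r' ps pt by simp
        show "x - y < n" using False xy ss r' ps pt by simp
        fix m assume m: "1 \<le> m" "m < x - y"
        then have "(y + m) mod n = y + m" using False xy ss r' ps pt by simp
        then show "inW r ((y + m) mod n)" using m False xy ss r' ps pt by (simp only: inW_def) linarith
      qed simp
      then show ?thesis using ss False by (simp add: wlen_def)
    qed
  next
    case bb
    then have bx: "n - r \<le> x" "n - r \<le> y" using wx wy by (auto simp: inW_def)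
    show ?thesis
    proof (cases "x < y")
      case True
      have "n - 2 \<le> t - s + (y - x)"
      proof (rule key[of x y "y - x"])
        show "(x + (y - x)) mod n = y" using True bx ps pt r by simp
        show "1 \<le> y - x" using True bx ps pt r by simp
        show "y - x < n" using True bx ps pt r by simp
        fix m assume m: "1 \<le> m" "m < y - x"
        then have "(x + m) mod n = x + m" using True bx ps pt r by simp
        then show "inW r ((x + m) mod n)" using m True bx ps pt r by (simp only: inW_def) linarith
      qed simp
      then show ?thesis using bb True by (simp add: wlen_def)
    next
      case False
      have "n - 2 \<le> t - s + (x - y)"
      proof (rule key[of y x "x - y"])
        show "(y + (x - y)) mod n = x" using False xy bx ps pt r by simp
        show "1 \<le> x - y" using False xy bx ps pt r by simp
        show "x - y < n" using False xy bx ps pt r by simp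
        fix m assume m: "1 \<le> m" "m < x - y"
        then have "(y + m) mod n = y + m" using False xy bx ps pt r by simp
        then show "inW r ((y + m) mod n)" using m False xy bx ps pt r by (simp only: inW_def) linarith
      qed simp
      then show ?thesis using bb False by (simp add: wlen_def)
    qed
  next
    case sb
    then have by': "n - r \<le> y" using wy by (auto simp: inW_def)
    have "n - 2 \<le> t - s + (n - y + x)"
    proof (rule key[of y x])
      show "(y + (n - y + x)) mod n = x" using ps pt by simp
      show "1 \<le> n - y + x" using pt by simp
      show "n - y + x < n" using sb by' r by simp
      fix m assume m: "1 \<le> m" "m < n - y + x"
      show "inW r ((y + m) mod n)"
      proof (cases "y + m < n")
        case True then show ?thesis using by' by (simp add: inW_def)
      next
        case False
        then have "(y + m) mod n = y + m - n" using m pt sb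
          by (simp add: le_mod_geq)
        then show ?thesis using m sb pt by (simp only: inW_def) linarith
      qed
    qed simp
    then show ?thesis using sb by (simp add: wlen_def add.commute)
  next
    case bs
    then have bx': "n - r \<le> x" using wx by (auto simp: inW_def)
    have "n - 2 \<le> t - s + (n - x + y)"
    proof (rule key[of x y])
      show "(x + (n - x + y)) mod n = y" using ps pt by simp
      show "1 \<le> n - x + y" using ps by simp
      show "n - x + y < n" using bs bx' r by simp
      fix m assume m: "1 \<le> m" "m < n - x + y"
      show "inW r ((x + m) mod n)"
      proof (cases "x + m < n")
        case True then show ?thesis using bx' by (simp add: inW_def)
      next
        case False
        then have "(x + m) mod n = x + m - n" using m ps bs
          by (simp add: le_mod_geq)
        then show ?thesis using m bs ps by (simp only: inW_def) linarith
      qed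
    qed simp
    then show ?thesis using bs by (simp add: wlen_def add.commute)
  qed
qed


lemma chord:
  assumes s: "s < n" and px: "P ! s = C ! x" "x < n" and py: "P ! Suc s = C ! y" "y < n"
  shows "x \<noteq> y \<and> n - 3 \<le> max x y - min x y \<and> n - 3 \<le> n - (max x y - min x y) \<and> max x y - min x y < n"
proof -
  have "P ! s \<noteq> P ! Suc s" using Pd Pl s by (simp add: nth_eq_iff_index_eq)
  then have xy: "x \<noteq> y" using px py by auto
  have st: "s < Suc s" "Suc s \<le> n" using s by auto
  have noav: "\<And>m u. 1 \<le> m \<Longrightarrow> m < l \<Longrightarrow> s < u \<Longrightarrow> u < Suc s \<Longrightarrow> C ! ((a + m) mod n) \<noteq> P ! u" for l a
    by auto
  show ?thesis
  proof (cases "x < y")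
    case True
    have 1: "n - 2 \<le> Suc s - s + (y - x)"
      by (rule GL2[OF st px py, of x y]) (use True px py in auto)
    have 2: "n - 2 \<le> Suc s - s + (n - (y - x))"
    proof (rule GL2[OF st px py, of y x])
      show "(y + (n - (y - x))) mod n = x" using True px py by simp
    qed (use True px py in auto)
    show ?thesis using 1 2 xy True px py by auto
  next
    case False
    then have yx: "y < x" using xy by simp
    have 1: "n - 2 \<le> Suc s - s + (x - y)"
      by (rule GL2[OF st px py, of y x]) (use yx px py in auto)
    have 2: "n - 2 \<le> Suc s - s + (n - (x - y))"
    proof (rule GL2[OF st px py, of x y])
      show "(x + (n - (x - y))) mod n = y" using yx px py by simp
    qed (use yx px py in auto)
    show ?thesis using 1 2 xy yx px py by auto
  qed
qed

lemma no_chord4: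
  assumes "k \<ge> 4" "s < n" "P ! s = C ! x" "x < n" "P ! Suc s = C ! y" "y < n"
  shows False
  using chord[OF assms(2-6)] assms(1) nk by linarith


lemma Cinj: "a < n \<Longrightarrow> b < n \<Longrightarrow> C ! a = C ! b \<Longrightarrow> a = b"
  using Cd Cl by (simp add: nth_eq_iff_index_eq)
lemma Pinj: "a \<le> n \<Longrightarrow> b \<le> n \<Longrightarrow> P ! a = P ! b \<Longrightarrow> a = b"
  using Pd Pl by (simp add: nth_eq_iff_index_eq)

lemma bad_case:
  assumes hd0: "P ! i = C ! 0" and ik: "i \<le> k" and first: "\<And>t. t < i \<Longrightarrow> P ! t \<notin> set C"
    and rdef: "r = max 2 i - 1"
    and A: "i < uA" "uA \<le> n" "jA < n" "P ! uA = C ! jA" "n - r \<le> jA"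
    and B: "i < uB" "uB \<le> n" "jB < n" "P ! uB = C ! jB" "1 \<le> jB" "jB \<le> r"
  shows "\<exists>p1 p2. decomposes_into_two_paths H p1 p2 \<and> path_length p1 \<in> {n - 1, n, n + 1}
            \<and> path_length p2 \<in> {n - 1, n, n + 1}"
proof -
  have r1: "1 \<le> r" "r < k" "2 * r < n" using rdef ik k3 nk by auto
  define Q where "Q u \<longleftrightarrow> i < u \<and> u \<le> n \<and> (\<exists>j<n. P ! u = C ! j \<and> j \<noteq> 0 \<and> inW r j)" for u
  have jA0: "jA \<noteq> 0" using A(5) r1(3) by linarith
  have QA: "Q uA" unfolding Q_def using A jA0 by (auto simp: inW_def)
  have QB: "Q uB" unfolding Q_def using B by (auto simp: inW_def)
  define t1 where "t1 = (LEAST u. Q u)"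
  have Qt1: "Q t1" unfolding t1_def by (rule LeastI[of Q uA, OF QA])
  have t1min: "\<And>u. u < t1 \<Longrightarrow> \<not> Q u" unfolding t1_def by (rule not_less_Least)
  have t1A: "t1 \<le> uA" "t1 \<le> uB" unfolding t1_def by (rule Least_le, fact QA, rule Least_le, fact QB)
  obtain w1 where w1: "w1 < n" "P ! t1 = C ! w1" "w1 \<noteq> 0" "inW r w1" and t1r: "i < t1" "t1 \<le> n"
    using Qt1 unfolding Q_def by blast
  have ex2: "\<exists>u. t1 < u \<and> Q u"
  proof (cases "uA = t1")
    case True
    have "uB \<noteq> t1"
    proof
      assume "uB = t1"
      then have "C ! jA = C ! jB" using True A B by simp
      then have "jA = jB" using Cinj A B by blast
      then show False using A B r1 by simp
    qed
    then show ?thesis using t1A QB by (intro exI[of _ uB]) auto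
  next
    case False then show ?thesis using t1A QA by (intro exI[of _ uA]) auto
  qed
  define t2 where "t2 = (LEAST u. t1 < u \<and> Q u)"
  have Qt2: "t1 < t2 \<and> Q t2" unfolding t2_def using ex2 by (rule LeastI_ex)
  have t2min: "\<And>u. u < t2 \<Longrightarrow> \<not> (t1 < u \<and> Q u)" unfolding t2_def by (rule not_less_Least)
  obtain w2 where w2: "w2 < n" "P ! t2 = C ! w2" "w2 \<noteq> 0" "inW r w2" and t2r: "t1 < t2" "t2 \<le> n"
    using Qt2 unfolding Q_def by blast
  have w12: "w1 \<noteq> w2"
  proof
    assume "w1 = w2"
    then have "P ! t1 = P ! t2" using w1 w2 by simp
    then show False using Pinj[of t1 t2] t1r t2r by simp
  qed
  have mid0: "P ! u \<noteq> C ! 0" if "i < u" "u \<le> n" for u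
  proof
    assume "P ! u = C ! 0"
    then have "P ! u = P ! i" using hd0 by simp
    then have "u = i" using Pinj[of u i] that ik nk by simp
    then show False using that by simp
  qed
  have b1: "n - 2 \<le> t1 - i + wlen r 0 w1"
  proof (rule GLW[OF r1(3) t1r hd0 _ w1(2) w1(1) _ _ w1(4)])
    show "0 < n" using n6 by simp
    show "0 \<noteq> w1" using w1 by simp
    show "inW r 0" by (simp add: inW_def)
    show "\<not> inW r j" if "i < u" "u < t1" "j < n" "P ! u = C ! j" "j \<noteq> 0" for u j
    proof
      assume "inW r j"
      then have "Q u" unfolding Q_def using that t1r by auto
      then show False using t1min that by blast
    qed
    show "\<And>u. i < u \<Longrightarrow> u < t1 \<Longrightarrow> P ! u \<noteq> C ! 0" using mid0 t1r by simp
  qed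
  have b2: "n - 2 \<le> t2 - t1 + wlen r w1 w2"
  proof (rule GLW[OF r1(3) t2r w1(2) w1(1) w2(2) w2(1) w12 w1(4) w2(4)])
    show "\<not> inW r j" if "t1 < u" "u < t2" "j < n" "P ! u = C ! j" "j \<noteq> 0" for u j
    proof
      assume "inW r j"
      then have "Q u" unfolding Q_def using that t1r t2r by auto
      then show False using t2min that by blast
    qed
    show "\<And>u. t1 < u \<Longrightarrow> u < t2 \<Longrightarrow> P ! u \<noteq> C ! 0" using mid0 t1r t2r by simp
  qed
  have wl1: "wlen r 0 w1 = (if w1 \<le> r then w1 else n - w1)" by (simp add: wlen_def)
  have wl1r: "wlen r 0 w1 \<le> r"
  proof (cases "w1 \<le> r")
    case True then show ?thesis using wl1 by simp
  next
    case False then have "n - r \<le> w1" using w1(4) by (simp add: inW_def)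
    then show ?thesis using wl1 False by simp
  qed
  have wl2r: "wlen r w1 w2 \<le> 2 * r"
  proof -
    have a: "w1 \<le> r \<or> n - r \<le> w1" "w2 \<le> r \<or> n - r \<le> w2" using w1(4) w2(4) by (simp_all add: inW_def)
    show ?thesis unfolding wlen_def using a w1(1) w2(1) r1 by (simp split: if_splits) linarith?
  qed
  have b1': "n + i \<le> t1 + wlen r 0 w1 + 2" using b1 t1r n6 by linarith
  have b2': "n + t1 \<le> t2 + wlen r w1 w2 + 2" using b2 t2r n6 by linarith
  show ?thesis
  proof (cases "k \<ge> 4")
    case True
    have False
    proof (cases "i \<le> 1")
      case True
      then have "r = 1" using rdef by simp
      then show False using b1' b2' wl1r wl2r t2r \<open>k \<ge> 4\<close> nk by linarith
    next
      case False
      then have rr: "r = i - 1" using rdef by simp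
      have "i = k" using b1' b2' wl1r wl2r t2r rr False ik nk by linarith
      then have "t1 = n - 1" "t2 = n" using b1' b2' wl1r wl2r t2r rr nk by linarith+
      then show False using no_chord4[OF \<open>k \<ge> 4\<close>, of t1 w1 w2] w1 w2 n6 by simp
    qed
    then show ?thesis ..
  next
    case False
    then have k3': "k = 3" using k3 by simp
    then have n6': "n = 6" using nk by simp
    have Gapp: "\<exists>p1 p2. decomposes_into_two_paths H p1 p2 \<and> path_length p1 \<in> {n - 1, n, n + 1}
            \<and> path_length p2 \<in> {n - 1, n, n + 1}"
      if G: "{P ! l, P ! j} \<in> cycle_edges C" "P ! l \<noteq> P ! j" "l \<le> 1" "l < j" "j \<le> n"
        "\<And>t. t < l \<Longrightarrow> P ! t \<notin> set C" "P ! (j - 1) \<notin> set C" for l j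
    proof -
      obtain C' where C': "distinct C'" "length C' = length C" "set C' = set C"
        "cycle_edges C' = cycle_edges C" "hd C' = P ! l" "last C' = P ! j"
        using reroot[OF Cd _ G(1) G(2)] Cl n6 by auto
      interpret C': cfg k n C' P using cfg_C C' Cl by simp
      have "\<exists>p1 p2. decomposes_into_two_paths (cycle_edges C' \<union> path_edges P) p1 p2
          \<and> path_length p1 \<in> {n - 1, n, n + 1} \<and> path_length p2 \<in> {n - 1, n, n + 1}"
        by (rule C'.Gcon) (use C' G in auto)
      then show ?thesis using C' by simp
    qed
    consider (i01) "i \<le> 1" | (i2) "i = 2" | (i3) "i = 3" using ik k3' by linarith
    then show ?thesis
    proof cases
      case i2
      then have "r = 1" using rdef by simp
      then show ?thesis using b1' b2' wl1r wl2r t2r i2 n6' by linarith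
    next
      case i3
      then have r2: "r = 2" using rdef by simp
      have tt: "t1 = 5" "t2 = 6" "wlen r 0 w1 = 2" using b1' b2' wl1r wl2r t2r t1r i3 n6' r2 by linarith+
      have ch: "3 \<le> max w1 w2 - min w1 w2 \<and> 3 \<le> 6 - (max w1 w2 - min w1 w2)"
        using chord[of 5 w1 w2] w1 w2 tt n6' by simp
      have w1c: "w1 = 2 \<or> w1 = 4" using tt(3) wl1 r2 n6' w1 by (auto split: if_splits)
      have w2c: "(w1 = 2 \<and> w2 = 5) \<or> (w1 = 4 \<and> w2 = 1)" using w1c ch w2 n6' by auto
      have nin: "P ! 4 \<notin> set C"
      proof
        assume "P ! 4 \<in> set C"
        then obtain j4 where j4: "j4 < n" "P ! 4 = C ! j4" using Cl by (auto simp: in_set_conv_nth)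
        have "P ! 4 \<noteq> C ! 0" using mid0[of 4] i3 n6' by simp
        then have j40: "j4 \<noteq> 0" using j4(2) by (cases j4) auto
        have j4W: "\<not> inW r j4"
        proof
          assume "inW r j4"
          then have "Q 4" unfolding Q_def using j4 j40 i3 n6' by auto
          then show False using t1min[of 4] tt by simp
        qed
        then have "j4 = 3" using j4 r2 n6' unfolding inW_def by auto
        then show False using chord[of 4 j4 w1] j4 w1 tt w1c n6' by auto
      qed
      have e: "{P ! 6, P ! 3} \<in> cycle_edges C"
      proof -
        have "{C ! (0 mod n), C ! (Suc 0 mod n)} \<in> cycle_edges C" by (rule cyc_mod)
        moreover have "{C ! (5 mod n), C ! (Suc 5 mod n)} \<in> cycle_edges C" by (rule cyc_mod)
        ultimately show ?thesis using hd0 i3 w2 w2c tt n6' by (auto simp: insert_commute)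
      qed
      have ne: "P ! 6 \<noteq> P ! 3" using Pinj[of 6 3] n6' by auto
      obtain C' where C': "distinct C'" "length C' = length C" "set C' = set C"
        "cycle_edges C' = cycle_edges C" "hd C' = P ! 6" "last C' = P ! 3"
        using reroot[OF Cd _ e ne] Cl n6' by auto
      interpret C': cfg k n C' P using cfg_C C' Cl by simp
      interpret R: cfg k n C' "rev P" by (rule C'.cfg_revP)
      have rv: "rev P ! 0 = P ! 6" "rev P ! 3 = P ! 3" "rev P ! 2 = P ! 4" using Pl n6' by (simp_all add: rev_nth)
      have "\<exists>p1 p2. decomposes_into_two_paths (cycle_edges C' \<union> path_edges (rev P)) p1 p2
          \<and> path_length p1 \<in> {n - 1, n, n + 1} \<and> path_length p2 \<in> {n - 1, n, n + 1}"
        by (rule R.Gcon[of 0 3]) (use C' rv nin n6' in auto)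
      then show ?thesis using C' by simp
    next
      case i01
      then have r1': "r = 1" using rdef by simp
      have ww: "w = 1 \<or> w = 5" if "w < n" "w \<noteq> 0" "inW r w" for w
        using that r1' n6' unfolding inW_def by auto
      have w1c: "w1 = 1 \<or> w1 = 5" using ww w1 by blast
      have w2c: "w2 = 1 \<or> w2 = 5" using ww w2 by blast
      have ww12: "(w1 = 1 \<and> w2 = 5) \<or> (w1 = 5 \<and> w2 = 1)" using w1c w2c w12 by auto
      have wl: "wlen r 0 w1 = 1" "wlen r w1 w2 = 2" unfolding wlen_def using ww12 r1' n6' by auto
      have tt: "i + 3 \<le> t1" "t1 + 2 \<le> t2" using b1' b2' wl n6' by linarith+
      have nin: "P ! (t2 - 1) \<notin> set C"
      proof
        assume "P ! (t2 - 1) \<in> set C"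
        then obtain x2 where x2: "x2 < n" "P ! (t2 - 1) = C ! x2" using Cl by (auto simp: in_set_conv_nth)
        have "P ! (t2 - 1) \<noteq> C ! 0" using mid0[of "t2 - 1"] tt t2r by simp
        then have x20: "x2 \<noteq> 0" using x2(2) by (cases x2) auto
        have x2W: "\<not> inW r x2"
        proof
          assume "inW r x2"
          then have "Q (t2 - 1)" unfolding Q_def using x2 x20 tt t1r t2r by auto
          then show False using t2min[of "t2 - 1"] tt by auto
        qed
        have ch: "3 \<le> max x2 w2 - min x2 w2 \<and> 3 \<le> 6 - (max x2 w2 - min x2 w2)"
          using chord[of "t2 - 1" x2 w2] x2 w2 t2r tt n6' by simp
        have "(w1 = 1 \<and> x2 = 2) \<or> (w1 = 5 \<and> x2 = 4)"
          using ch ww12 x2W x2 r1' n6' unfolding inW_def by auto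
        then have "n - 2 \<le> (t2 - 1 - t1) + 1"
        proof
          assume h: "w1 = 1 \<and> x2 = 2"
          show ?thesis
            by (rule GL2[of t1 "t2 - 1" w1 x2 w1 x2 1]) (use h tt t2r w1 x2 n6' in auto)
        next
          assume h: "w1 = 5 \<and> x2 = 4"
          show ?thesis
            by (rule GL2[of t1 "t2 - 1" w1 x2 x2 w1 1]) (use h tt t2r w1 x2 n6' in auto)
        qed
        then show False using tt t2r n6' by linarith
      qed
      have e: "{P ! i, P ! t2} \<in> cycle_edges C"
      proof -
        have "{C ! (0 mod n), C ! (Suc 0 mod n)} \<in> cycle_edges C" by (rule cyc_mod)
        moreover have "{C ! (5 mod n), C ! (Suc 5 mod n)} \<in> cycle_edges C" by (rule cyc_mod)
        ultimately show ?thesis using hd0 w2 w2c n6' by (auto simp: insert_commute)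
      qed
      have ne: "P ! i \<noteq> P ! t2" using Pinj[of i t2] t1r t2r by auto
      show ?thesis by (rule Gapp[OF e ne i01]) (use t1r t2r first nin in auto)
    qed
  qed
qed


lemma CL:
  assumes hd0: "P ! i = C ! 0" and ik: "i \<le> k" and first: "\<And>t. t < i \<Longrightarrow> P ! t \<notin> set C"
  shows "\<exists>p1 p2. decomposes_into_two_paths H p1 p2 \<and> path_length p1 \<in> {n - 1, n, n + 1}
            \<and> path_length p2 \<in> {n - 1, n, n + 1}"
proof -
  define r where "r = max 2 i - 1"
  have notI: "u = i" if "P ! u = C ! 0" "u \<le> n" for u
    using Pinj[of u i] that hd0 ik nk by simp
  show ?thesis
  proof (cases "\<forall>u j. i < u \<longrightarrow> u \<le> n \<longrightarrow> j < n \<longrightarrow> P ! u = C ! j \<longrightarrow> j + max 2 i \<le> n")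
    case True then show ?thesis by (intro Fcon[OF hd0 ik first]) auto
  next
    case False
    then obtain uA jA where A: "i < uA" "uA \<le> n" "jA < n" "P ! uA = C ! jA" "\<not> jA + max 2 i \<le> n" by blast
    have A5: "n - r \<le> jA" using A(5) unfolding r_def by linarith
    show ?thesis
    proof (cases "\<forall>u j. i < u \<longrightarrow> u \<le> n \<longrightarrow> j < n \<longrightarrow> P ! u = C ! j \<longrightarrow> max 2 i \<le> j")
      case True
      have rf: "distinct (refl C)" "length (refl C) = length C" "set (refl C) = set C" "refl C ! 0 = C ! 0"
        "\<And>j. 1 \<le> j \<Longrightarrow> j < length C \<Longrightarrow> refl C ! j = C ! (length C - j)"
        using refl_facts[OF Cne Cd] by auto
      interpret R: cfg k n "refl C" P using cfg_C rf ce_refl[OF Cne] Cl by simp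
      have "\<exists>p1 p2. decomposes_into_two_paths (cycle_edges (refl C) \<union> path_edges P) p1 p2
          \<and> path_length p1 \<in> {n - 1, n, n + 1} \<and> path_length p2 \<in> {n - 1, n, n + 1}"
      proof (rule R.Fcon[of i])
        show "P ! i = refl C ! 0" using hd0 rf by simp
        show "i \<le> k" by (fact ik)
        show "\<And>t. t < i \<Longrightarrow> P ! t \<notin> set (refl C)" using first rf by simp
        fix u j assume u: "i < u" "u \<le> n" "j < n" "P ! u = refl C ! j"
        show "j + max 2 i \<le> n"
        proof (cases "j = 0")
          case True
          then have "u = i" using notI u rf by simp
          then show ?thesis using u by simp
        next
          case False
          then have "P ! u = C ! (n - j)" using u rf Cl by simp
          then have "max 2 i \<le> n - j" using True u False by simp
          then show ?thesis using u(3) by linarith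
        qed
      qed
      then show ?thesis using ce_refl[OF Cne] by simp
    next
      case False
      then obtain uB jB where B: "i < uB" "uB \<le> n" "jB < n" "P ! uB = C ! jB" "\<not> max 2 i \<le> jB" by blast
      have "jB \<noteq> 0"
      proof
        assume "jB = 0"
        then have "uB = i" using notI B by simp
        then show False using B by simp
      qed
      then have B5: "1 \<le> jB" "jB \<le> r" using B(5) unfolding r_def by auto
      show ?thesis by (rule bad_case[OF hd0 ik first r_def A(1-4) A5 B(1-4) B5])
    qed
  qed
qed


lemma from_hit:
  assumes ik: "i \<le> k" and hit: "P ! i \<in> set C" and first: "\<And>t. t < i \<Longrightarrow> P ! t \<notin> set C"
  shows "\<exists>p1 p2. decomposes_into_two_paths H p1 p2 \<and> path_length p1 \<in> {n - 1, n, n + 1}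
            \<and> path_length p2 \<in> {n - 1, n, n + 1}"
proof -
  obtain m where m: "m < n" "C ! m = P ! i" using hit Cl by (auto simp: in_set_conv_nth)
  define C' where "C' = rotate m C"
  have C': "distinct C'" "length C' = n" "cycle_edges C' = cycle_edges C" "set C' = set C"
    using Cd Cl by (simp_all only: C'_def ce_rotate distinct_rotate length_rotate set_rotate)
  have h: "C' ! 0 = C ! m" unfolding C'_def using nth_rotate[of 0 C m] m Cl n6 by simp
  interpret R: cfg k n C' P using cfg_C C' by simp
  have "\<exists>p1 p2. decomposes_into_two_paths (cycle_edges C' \<union> path_edges P) p1 p2
      \<and> path_length p1 \<in> {n - 1, n, n + 1} \<and> path_length p2 \<in> {n - 1, n, n + 1}"
    by (rule R.CL[of i]) (use h m ik first C' in auto)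
  then show ?thesis using C' by simp
qed

lemma main_cfg:
  assumes hit: "set C \<inter> set P \<noteq> {}"
  shows "\<exists>p1 p2. decomposes_into_two_paths H p1 p2 \<and> path_length p1 \<in> {n - 1, n, n + 1}
            \<and> path_length p2 \<in> {n - 1, n, n + 1}"
proof -
  obtain x where x: "x \<in> set C" "x \<in> set P" using hit by blast
  then obtain t0 where t0: "t0 < length P" "P ! t0 = x" by (auto simp: in_set_conv_nth)
  then have t0': "P ! t0 \<in> set C" using x by simp
  define h1 where "h1 = (LEAST t. P ! t \<in> set C)"
  have h1: "P ! h1 \<in> set C" unfolding h1_def by (rule LeastI[of _ t0]) (fact t0')
  have h1le: "h1 \<le> t0" unfolding h1_def by (rule Least_le) (fact t0')
  have h1min: "\<And>t. t < h1 \<Longrightarrow> P ! t \<notin> set C" unfolding h1_def by (rule not_less_Least)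
  show ?thesis
  proof (cases "h1 \<le> k")
    case True then show ?thesis by (rule from_hit[OF _ h1 h1min])
  next
    case False
    interpret R: cfg k n C "rev P" by (rule cfg_revP)
    have hn: "h1 \<le> n" using h1le t0 Pl by simp
    have rh: "rev P ! (n - h1) \<in> set C" using h1 hn Pl by (simp add: rev_nth Suc_diff_le)
    define h2 where "h2 = (LEAST t. rev P ! t \<in> set C)"
    have h2: "rev P ! h2 \<in> set C" unfolding h2_def by (rule LeastI[of _ "n - h1"]) (fact rh)
    have h2le: "h2 \<le> n - h1" unfolding h2_def by (rule Least_le) (fact rh)
    have h2min: "\<And>t. t < h2 \<Longrightarrow> rev P ! t \<notin> set C" unfolding h2_def by (rule not_less_Least)
    have "h2 \<le> k" using h2le False nk by linarith
    then have "\<exists>p1 p2. decomposes_into_two_paths (cycle_edges C \<union> path_edges (rev P)) p1 p2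
      \<and> path_length p1 \<in> {n - 1, n, n + 1} \<and> path_length p2 \<in> {n - 1, n, n + 1}"
      by (rule R.from_hit[OF _ h2 h2min])
    then show ?thesis by simp
  qed
qed

end

theorem mainTheorem8:
  fixes k :: nat and C P :: "'a list"
  assumes "k \<ge> 3"
    and "is_cycle C" and "cycle_length C = 2 * k"
    and "is_path P" and "path_length P = 2 * k"
    and "cycle_edges C \<inter> path_edges P = {}"
    and "set C \<inter> set P \<noteq> {}"
    and "girth (cycle_edges C \<union> path_edges P) \<ge> enat (2 * k - 2)"
  shows "\<exists>p1 p2. decomposes_into_two_paths (cycle_edges C \<union> path_edges P) p1 p2 \<and>
           path_length p1 \<in> {2 * k - 1, 2 * k, 2 * k + 1} \<and>
           path_length p2 \<in> {2 * k - 1, 2 * k, 2 * k + 1}"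
proof -
  have Pne: "P \<noteq> []" using assms(4) by (simp add: is_path_def)
  interpret cfg k "2 * k" C P
  proof
    show "k \<ge> 3" by (fact assms(1))
    show "2 * k = 2 * k" ..
    show "distinct C" using assms(2) by (simp add: is_cycle_def)
    show "length C = 2 * k" using assms(3) by (simp add: cycle_length_def)
    show "distinct P" using assms(4) by (simp add: is_path_def)
    show "length P = 2 * k + 1" using assms(5) Pne by (cases P) (simp_all add: path_length_def)
    show "cycle_edges C \<inter> path_edges P = {}" by (fact assms(6))
    show "enat (2 * k - 2) \<le> girth (cycle_edges C \<union> path_edges P)" by (fact assms(8))
  qed
  show ?thesis using main_cfg[OF assms(7)] by simp
qed


end
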